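(* Let $X$ be a topological space, $\Delta$ a partition of $X$, $Y=X/\Delta$ with the quotient topology, $p:X\to Y$ the quotient map, $\omega\in\Delta$ and $y=p(\omega)$. Then $H(\omega)\subset H_S(\omega)\subset p^{-1}(H(y))$. If $p$ is an open map, then $H(\omega)=H_S(\omega)=p^{-1}(H(y))$ and $p(H_S(\omega))=H(y)$.
   Context: For $y\in Y$, $H(y)=\bigcap_V\overline{V}$ over all neighborhoods $V$ of $y$. For $U\subset X$, $S(U)=p^{-1}(p(U))$ is its saturation. For $\omega\in\Delta$: $H(\omega)=\bigcap_{N}\overline{S(N)}$ where $N$ runs over all open neighborhoods of $\omega$ in $X$, and $H_S(\omega)=\bigcap_{N_S}\overline{N_S}$ where $N_S$ runs over all saturated open neighborhoods of $\omega$. *)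

theory Defs
  imports "HOL-Analysis.Analysis"
begin

definition is_partition :: "'a topology \<Rightarrow> 'a set set \<Rightarrow> bool" where
  "is_partition X \<Delta> \<longleftrightarrow> (\<forall>B\<in>\<Delta>. B \<noteq> {}) \<and> \<Union>\<Delta> = topspace X \<and>
     (\<forall>A\<in>\<Delta>. \<forall>B\<in>\<Delta>. A \<noteq> B \<longrightarrow> A \<inter> B = {})"

definition qmap :: "'a set set \<Rightarrow> 'a \<Rightarrow> 'a set" where
  "qmap \<Delta> x = (THE B. B \<in> \<Delta> \<and> x \<in> B)"

definition qtop :: "'a topology \<Rightarrow> 'a set set \<Rightarrow> 'a set topology" where
  "qtop X \<Delta> = topology (\<lambda>V. V \<subseteq> \<Delta> \<and> openin X {x \<in> topspace X. qmap \<Delta> x \<in> V})"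

definition Hpt :: "'b topology \<Rightarrow> 'b \<Rightarrow> 'b set" where
  "Hpt Y y = \<Inter> {Y closure_of V | V. V \<subseteq> topspace Y \<and> (\<exists>U. openin Y U \<and> y \<in> U \<and> U \<subseteq> V)}"

definition sat :: "'a topology \<Rightarrow> 'a set set \<Rightarrow> 'a set \<Rightarrow> 'a set" where
  "sat X \<Delta> U = {x \<in> topspace X. qmap \<Delta> x \<in> qmap \<Delta> ` U}"

definition Hblk :: "'a topology \<Rightarrow> 'a set set \<Rightarrow> 'a set \<Rightarrow> 'a set" where
  "Hblk X \<Delta> \<omega> = \<Inter> {X closure_of (sat X \<Delta> N) | N. openin X N \<and> \<omega> \<subseteq> N}"

definition HS :: "'a topology \<Rightarrow> 'a set set \<Rightarrow> 'a set \<Rightarrow> 'a set" where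
  "HS X \<Delta> \<omega> = \<Inter> {X closure_of N | N. openin X N \<and> \<omega> \<subseteq> N \<and> sat X \<Delta> N = N}"

end

theory Submission
  imports Defs
begin

lemma qmap_blk:
  assumes P: "is_partition X \<Delta>" and B: "B \<in> \<Delta>" and x: "x \<in> B"
  shows "qmap \<Delta> x = B"
  unfolding qmap_def
proof (rule the_equality)
  show "B \<in> \<Delta> \<and> x \<in> B" using B x by blast
  fix C assume "C \<in> \<Delta> \<and> x \<in> C"
  then show "C = B" using P B x unfolding is_partition_def by blast
qed

lemma qmap_in:
  assumes P: "is_partition X \<Delta>" and x: "x \<in> topspace X"
  shows "qmap \<Delta> x \<in> \<Delta> \<and> x \<in> qmap \<Delta> x"
proof -
  obtain B where B: "B \<in> \<Delta>" "x \<in> B" using P x unfolding is_partition_def by blast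
  have "qmap \<Delta> x = B" using qmap_blk[OF P B] .
  then show ?thesis using B by simp
qed

lemma openin_qtop:
  "openin (qtop X \<Delta>) V \<longleftrightarrow> V \<subseteq> \<Delta> \<and> openin X {x \<in> topspace X. qmap \<Delta> x \<in> V}"
proof -
  have "istopology (\<lambda>V. V \<subseteq> \<Delta> \<and> openin X {x \<in> topspace X. qmap \<Delta> x \<in> V})"
    apply (simp only: istopology_def)
  proof (rule conjI; intro allI impI)
    fix S T :: "'a set set"
    assume a: "S \<subseteq> \<Delta> \<and> openin X {x \<in> topspace X. qmap \<Delta> x \<in> S}"
      "T \<subseteq> \<Delta> \<and> openin X {x \<in> topspace X. qmap \<Delta> x \<in> T}"
    have "{x \<in> topspace X. qmap \<Delta> x \<in> S \<inter> T} =
      {x \<in> topspace X. qmap \<Delta> x \<in> S} \<inter> {x \<in> topspace X. qmap \<Delta> x \<in> T}" by blast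
    then show "S \<inter> T \<subseteq> \<Delta> \<and> openin X {x \<in> topspace X. qmap \<Delta> x \<in> S \<inter> T}"
      using a by auto
  next
    fix K :: "'a set set set"
    assume a: "\<forall>S\<in>K. S \<subseteq> \<Delta> \<and> openin X {x \<in> topspace X. qmap \<Delta> x \<in> S}"
    have "{x \<in> topspace X. qmap \<Delta> x \<in> \<Union>K} = (\<Union>S\<in>K. {x \<in> topspace X. qmap \<Delta> x \<in> S})"
      by blast
    then show "\<Union>K \<subseteq> \<Delta> \<and> openin X {x \<in> topspace X. qmap \<Delta> x \<in> \<Union>K}"
      using a by auto
  qed
  then show ?thesis unfolding qtop_def by simp
qed

lemma topspace_qtop:
  assumes P: "is_partition X \<Delta>"
  shows "topspace (qtop X \<Delta>) = \<Delta>"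
proof -
  have "openin (qtop X \<Delta>) \<Delta>"
  proof -
    have "{x \<in> topspace X. qmap \<Delta> x \<in> \<Delta>} = topspace X" using qmap_in[OF P] by blast
    then show ?thesis unfolding openin_qtop by simp
  qed
  moreover have "topspace (qtop X \<Delta>) \<subseteq> \<Delta>"
    using openin_qtop[of X \<Delta> "topspace (qtop X \<Delta>)"] by simp
  ultimately show ?thesis using openin_subset by blast
qed

lemma cont_q:
  assumes P: "is_partition X \<Delta>"
  shows "continuous_map X (qtop X \<Delta>) (qmap \<Delta>)"
  unfolding continuous_map_def
  using qmap_in[OF P] topspace_qtop[OF P] openin_qtop[of X \<Delta>] by auto

lemma HS_elim:
  "x \<in> HS X \<Delta> \<omega> \<Longrightarrow> openin X N \<Longrightarrow> \<omega> \<subseteq> N \<Longrightarrow> sat X \<Delta> N = N \<Longrightarrow> x \<in> X closure_of N"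
  unfolding HS_def by blast

lemma HS_intro:
  "(\<And>N. openin X N \<Longrightarrow> \<omega> \<subseteq> N \<Longrightarrow> sat X \<Delta> N = N \<Longrightarrow> x \<in> X closure_of N) \<Longrightarrow> x \<in> HS X \<Delta> \<omega>"
  unfolding HS_def by blast

lemma Hblk_intro:
  "(\<And>N. openin X N \<Longrightarrow> \<omega> \<subseteq> N \<Longrightarrow> x \<in> X closure_of (sat X \<Delta> N)) \<Longrightarrow> x \<in> Hblk X \<Delta> \<omega>"
  unfolding Hblk_def by blast

theorem lemma3p5:
  fixes X :: "'a topology" and \<Delta> :: "'a set set" and \<omega> :: "'a set" and y :: "'a set"
  assumes "is_partition X \<Delta>"
    and "\<omega> \<in> \<Delta>"
    and "qmap \<Delta> ` \<omega> = {y}"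
  shows "Hblk X \<Delta> \<omega> \<subseteq> HS X \<Delta> \<omega>
       \<and> HS X \<Delta> \<omega> \<subseteq> {x \<in> topspace X. qmap \<Delta> x \<in> Hpt (qtop X \<Delta>) y}
       \<and> (open_map X (qtop X \<Delta>) (qmap \<Delta>) \<longrightarrow>
            Hblk X \<Delta> \<omega> = HS X \<Delta> \<omega>
          \<and> HS X \<Delta> \<omega> = {x \<in> topspace X. qmap \<Delta> x \<in> Hpt (qtop X \<Delta>) y}
          \<and> qmap \<Delta> ` HS X \<Delta> \<omega> = Hpt (qtop X \<Delta>) y)"
proof -
  note P = assms(1)
  define p where "p = qmap \<Delta>"
  define Y where "Y = qtop X \<Delta>"
  have ne: "\<omega> \<noteq> {}" using P assms(2) unfolding is_partition_def by simp
  have wX: "\<omega> \<subseteq> topspace X"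
  proof -
    have "\<Union>\<Delta> = topspace X" using P unfolding is_partition_def by simp
    then show ?thesis using assms(2) by (metis Union_upper)
  qed
  have yw: "y = \<omega>"
  proof -
    obtain a where a: "a \<in> \<omega>" using ne by blast
    then have "qmap \<Delta> a = \<omega>" using qmap_blk[OF P assms(2)] by simp
    moreover have "qmap \<Delta> a \<in> {y}" using assms(3) a by (metis imageI)
    ultimately show ?thesis by simp
  qed
  have pin: "\<And>x. x \<in> topspace X \<Longrightarrow> p x \<in> \<Delta> \<and> x \<in> p x" unfolding p_def by (rule qmap_in[OF P])
  have pblk: "\<And>B x. B \<in> \<Delta> \<Longrightarrow> x \<in> B \<Longrightarrow> p x = B" unfolding p_def by (rule qmap_blk[OF P])
  have pw: "\<And>x. x \<in> \<omega> \<Longrightarrow> p x = \<omega>" using pblk[OF assms(2)] by simp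
  have tY: "topspace Y = \<Delta>" using topspace_qtop[OF P] Y_def by simp
  have oY: "\<And>V. openin Y V \<longleftrightarrow> V \<subseteq> \<Delta> \<and> openin X {x \<in> topspace X. p x \<in> V}"
    using openin_qtop Y_def p_def by simp
  have cont: "continuous_map X Y p" using cont_q[OF P] Y_def p_def by simp
  have satd: "\<And>N. sat X \<Delta> N = {x \<in> topspace X. p x \<in> p ` N}" unfolding sat_def p_def by simp
  have Hpt_eq: "Hpt Y y = \<Inter> {Y closure_of U | U. openin Y U \<and> \<omega> \<in> U}"
  proof
    show "Hpt Y y \<subseteq> \<Inter> {Y closure_of U | U. openin Y U \<and> \<omega> \<in> U}"
    proof
      fix z assume z: "z \<in> Hpt Y y"
      show "z \<in> \<Inter> {Y closure_of U | U. openin Y U \<and> \<omega> \<in> U}"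
      proof
        fix C assume "C \<in> {Y closure_of U | U. openin Y U \<and> \<omega> \<in> U}"
        then obtain U where U: "C = Y closure_of U" "openin Y U" "\<omega> \<in> U" by blast
        have "U \<subseteq> topspace Y" using U(2) by (rule openin_subset)
        then have "C \<in> {Y closure_of V | V. V \<subseteq> topspace Y \<and> (\<exists>U. openin Y U \<and> y \<in> U \<and> U \<subseteq> V)}"
          using U yw by blast
        then show "z \<in> C" using z unfolding Hpt_def by blast
      qed
    qed
    show "\<Inter> {Y closure_of U | U. openin Y U \<and> \<omega> \<in> U} \<subseteq> Hpt Y y"
    proof
      fix z assume z: "z \<in> \<Inter> {Y closure_of U | U. openin Y U \<and> \<omega> \<in> U}"
      show "z \<in> Hpt Y y" unfolding Hpt_def yw
      proof
        fix C assume "C \<in> {Y closure_of V |V. V \<subseteq> topspace Y \<and> (\<exists>U. openin Y U \<and> \<omega> \<in> U \<and> U \<subseteq> V)}"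
        then obtain V U where C: "C = Y closure_of V" "openin Y U" "\<omega> \<in> U" "U \<subseteq> V" by blast
        then have "z \<in> Y closure_of U" using z by blast
        then show "z \<in> C" using C closure_of_mono by blast
      qed
    qed
  qed
  have HpY: "Hpt Y y \<subseteq> \<Delta>"
  proof -
    have "openin Y (topspace Y)" by (rule openin_topspace)
    then have "openin Y \<Delta>" using tY by simp
    then have "Y closure_of \<Delta> \<in> {Y closure_of U | U. openin Y U \<and> \<omega> \<in> U}"
      using assms(2) by blast
    then have "Hpt Y y \<subseteq> Y closure_of \<Delta>" unfolding Hpt_eq by (rule Inter_lower)
    moreover have "Y closure_of \<Delta> \<subseteq> \<Delta>" using closure_of_subset_topspace[of Y \<Delta>] tY by simp
    ultimately show ?thesis by (rule order_trans)
  qed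
  have p1: "Hblk X \<Delta> \<omega> \<subseteq> HS X \<Delta> \<omega>"
    unfolding Hblk_def HS_def
  proof (rule Inter_anti_mono)
    show "{X closure_of N |N. openin X N \<and> \<omega> \<subseteq> N \<and> sat X \<Delta> N = N}
       \<subseteq> {X closure_of sat X \<Delta> N |N. openin X N \<and> \<omega> \<subseteq> N}"
    proof
      fix C assume "C \<in> {X closure_of N |N. openin X N \<and> \<omega> \<subseteq> N \<and> sat X \<Delta> N = N}"
      then obtain N where N: "C = X closure_of N" "openin X N" "\<omega> \<subseteq> N" "sat X \<Delta> N = N" by blast
      then have "C = X closure_of sat X \<Delta> N" by simp
      then show "C \<in> {X closure_of sat X \<Delta> N |N. openin X N \<and> \<omega> \<subseteq> N}" using N(2,3) by blast
    qed
  qed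
  have p2: "HS X \<Delta> \<omega> \<subseteq> {x \<in> topspace X. p x \<in> Hpt Y y}"
  proof
    fix x assume x: "x \<in> HS X \<Delta> \<omega>"
    have sT: "sat X \<Delta> (topspace X) = topspace X" unfolding satd by blast
    have "x \<in> X closure_of (topspace X)"
      using HS_elim[OF x openin_topspace wX sT] .
    then have xt: "x \<in> topspace X" by (rule subsetD[OF closure_of_subset_topspace])
    have "p x \<in> Y closure_of U" if U: "openin Y U" "\<omega> \<in> U" for U
    proof -
      define N where "N = {x \<in> topspace X. p x \<in> U}"
      have No: "openin X N" using U oY N_def by blast
      have Nw: "\<omega> \<subseteq> N" using wX pw U(2) unfolding N_def by blast
      have Ns: "sat X \<Delta> N = N" unfolding satd N_def by auto
      have "x \<in> X closure_of N" using HS_elim[OF x No Nw Ns] .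
      then have "p x \<in> Y closure_of (p ` N)"
        using continuous_map_image_closure_subset[OF cont] by blast
      moreover have "p ` N \<subseteq> U" unfolding N_def by auto
      ultimately show ?thesis using closure_of_mono by blast
    qed
    then have "p x \<in> Hpt Y y" unfolding Hpt_eq by blast
    then show "x \<in> {x \<in> topspace X. p x \<in> Hpt Y y}" using xt by blast
  qed
  have p3: "open_map X Y p \<Longrightarrow> Hblk X \<Delta> \<omega> = HS X \<Delta> \<omega>
          \<and> HS X \<Delta> \<omega> = {x \<in> topspace X. p x \<in> Hpt Y y}
          \<and> p ` HS X \<Delta> \<omega> = Hpt Y y"
  proof -
    assume om: "open_map X Y p"
    have a: "HS X \<Delta> \<omega> \<subseteq> Hblk X \<Delta> \<omega>"
    proof
      fix x assume x: "x \<in> HS X \<Delta> \<omega>"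
      show "x \<in> Hblk X \<Delta> \<omega>"
      proof (rule Hblk_intro)
        fix N assume C: "openin X N" "\<omega> \<subseteq> N"
        have "openin Y (p ` N)" using om C unfolding open_map_def by blast
        then have o: "openin X (sat X \<Delta> N)" unfolding satd using oY by blast
        have NX: "N \<subseteq> topspace X" using C openin_subset by blast
        have s2: "sat X \<Delta> (sat X \<Delta> N) = sat X \<Delta> N" unfolding satd using NX by auto
        have w2: "\<omega> \<subseteq> sat X \<Delta> N" unfolding satd using C NX by auto
        show "x \<in> X closure_of sat X \<Delta> N" using HS_elim[OF x o w2 s2] .
      qed
    qed
    have b: "{x \<in> topspace X. p x \<in> Hpt Y y} \<subseteq> HS X \<Delta> \<omega>"
    proof
      fix x assume x: "x \<in> {x \<in> topspace X. p x \<in> Hpt Y y}"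
      show "x \<in> HS X \<Delta> \<omega>"
      proof (rule HS_intro)
        fix N assume C: "openin X N" "\<omega> \<subseteq> N" "sat X \<Delta> N = N"
        have oN: "openin Y (p ` N)" using om C unfolding open_map_def by blast
        obtain a where a: "a \<in> \<omega>" using ne by blast
        have "\<omega> \<in> p ` N" using C(2) a pw[OF a] by (metis imageI subsetD)
        then have "Y closure_of (p ` N) \<in> {Y closure_of U | U. openin Y U \<and> \<omega> \<in> U}"
          using oN by blast
        moreover have "p x \<in> Hpt Y y" using x by blast
        ultimately have pxc: "p x \<in> Y closure_of (p ` N)" unfolding Hpt_eq by blast
        show "x \<in> X closure_of N" unfolding in_closure_of
        proof (intro conjI allI impI)
          show "x \<in> topspace X" using x by blast
          fix W assume W: "x \<in> W \<and> openin X W"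
          have "openin Y (p ` W)" using om W unfolding open_map_def by blast
          moreover have "p x \<in> p ` W" using W by blast
          ultimately obtain q where q: "q \<in> p ` N" "q \<in> p ` W"
            using pxc unfolding in_closure_of by blast
          then obtain w n where wn: "w \<in> W" "n \<in> N" "p w = p n" by auto
          have "w \<in> topspace X" using W wn openin_subset by blast
          then have "w \<in> sat X \<Delta> N" unfolding satd using wn by blast
          then show "\<exists>y. y \<in> N \<and> y \<in> W" using C(3) wn by blast
        qed
      qed
    qed
    have c: "p ` {x \<in> topspace X. p x \<in> Hpt Y y} = Hpt Y y"
    proof
      show "p ` {x \<in> topspace X. p x \<in> Hpt Y y} \<subseteq> Hpt Y y" by blast
      show "Hpt Y y \<subseteq> p ` {x \<in> topspace X. p x \<in> Hpt Y y}"
      proof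
        fix B assume B: "B \<in> Hpt Y y"
        then have BD: "B \<in> \<Delta>" using HpY by blast
        have "B \<noteq> {}" using P BD unfolding is_partition_def by simp
        then obtain b where b: "b \<in> B" by blast
        have U: "\<Union>\<Delta> = topspace X" using P unfolding is_partition_def by simp
        have "b \<in> \<Union>\<Delta>" using BD b by (rule UnionI)
        then have "b \<in> topspace X" using U by simp
        moreover have "p b = B" using pblk[OF BD b] .
        ultimately show "B \<in> p ` {x \<in> topspace X. p x \<in> Hpt Y y}" using B by blast
      qed
    qed
    have e1: "Hblk X \<Delta> \<omega> = HS X \<Delta> \<omega>" using a p1 by (rule antisym[rotated])
    have e2: "HS X \<Delta> \<omega> = {x \<in> topspace X. p x \<in> Hpt Y y}" using p2 b by (rule antisym)
    show ?thesis using e1 e2 c by simp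
  qed
  have p3': "open_map X Y p \<longrightarrow> Hblk X \<Delta> \<omega> = HS X \<Delta> \<omega>
          \<and> HS X \<Delta> \<omega> = {x \<in> topspace X. p x \<in> Hpt Y y}
          \<and> p ` HS X \<Delta> \<omega> = Hpt Y y" using p3 by (rule impI)
  show ?thesis using p1 p2 p3' unfolding p_def Y_def by (rule conjI[OF _ conjI])
qed

end
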